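(* Let $M\in\Lambda_{\mathrm{NF}}$ have blueprint $\alpha$, with $\mathrm{Free}(M)=(x_1,\dots,x_n)$ and $\Omega(x_1,\dots,x_n)=(\chi_1,\dots,\chi_n)$. For each $i\in\{0,\dots,n\}$, let $\alpha_i$ be the restriction of $\alpha$ to $\mathrm{dom}(\alpha)\cap\{a : \mathrm{Free}(M|_a)\subseteq\{x_1,\dots,x_i\}\}$, and let $\beta_i$ be the blueprint of $\lambda x_{i+1}\dots x_n.M$. Then: (1) for each $i\in\{0,\dots,n\}$, $\mathrm{dom}(\beta_i)=\{1^{n-i}\cdot a : a\in\mathrm{dom}(\alpha_i)\}$ and $\beta_i|_{1^{n-i}}=\alpha_i$, where $1^k$ denotes the address consisting of $k$ ones; (2) for each $i\in\{1,\dots,n\}$: (a) there exist addresses $a^i_0,\dots,a^i_{p_i}$ with $\{a^i_0,\dots,a^i_{p_i}\}=\{a : M|_a=x_i\}$ and $\alpha_i\rhd^{a^i_0}_{\chi_i}\cdots\rhd^{a^i_{p_i}}_{\chi_i}\alpha_{i-1}$; (b) if $\{b_0,\dots,b_{p_i}\}=\{a : M|_a=x_i\}$ and $\alpha_i\rhd^{b_0}_{\chi_i}\cdots\rhd^{b_{p_i}}_{\chi_i}\alpha'$, then $\alpha'=\alpha_{i-1}$; (3) $(\chi_1,\dots,\chi_n)\in\mathbb F(\alpha)$.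
   Context: Formulas are built from atoms with $\to$. Let $\mathcal X$ be a countably infinite set of variables with an injective map $\mathcal O:\mathcal X\to\mathbb N$; $x<y$ iff $\mathcal O(x)<\mathcal O(y)$. Terms are pure $\lambda$-terms over $\mathcal X$, not identified up to $\alpha$-conversion; no two $\lambda$'s bind the same variable and no variable is both free and bound. $\mathrm{Free}(M)$ is the strictly increasing sequence of free variables of $M$. HRM terms: variables; $\lambda x.M$ with $M$ HRM and $x$ the greatest free variable of $M$; $(MN)$ with $M,N$ HRM and every free variable of $M$ $\le$ some free variable of $N$. Fix $\Omega$ from variables to formulas with each $\Omega^{-1}(\phi)$ infinite; $\Omega(x_1,\dots,x_n)=(\Omega(x_1),\dots,\Omega(x_n))$. Typing: $x:\Omega(x)$; $\lambda x.M:\chi\to\psi$ if $x:\chi$, $M:\psi$, $\lambda x.M$ HRM; $(MN):\psi$ if $M:\chi\to\psi$, $N:\chi$, $(MN)$ HRM. $\Lambda_{\mathrm{NF}}$ is the set of typed $\beta$-normal terms. Addresses are finite sequences of positive integers with prefix order $\le$, concatenation $\cdot$, empty address $\varepsilon$. Terms are identified with trees: $x$ is $\varepsilon\mapsto x$; $\lambda x.M$ maps $\varepsilon$ to $\lambda x$ with subtree $M$ at $(1)$; $(M_1M_2)$ maps $\varepsilon$ to $@$ with subtrees $M_1,M_2$ at $(1),(2)$; $M|_a$ is the subterm at $a$. For a partial tree $\pi$, $\pi|_a$ is $c\mapsto\pi(a\cdot c)$. Let $\mathfrak S$ consist of all formulas (arity 0) and symbols $@_\phi$ (arity 2). A blueprint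 is a finite partial tree with values in $\mathfrak S$ such that if $\alpha(a)=@_\phi$ then $\alpha|_{a\cdot(1)},\alpha|_{a\cdot(2)}$ are non-empty. Notation: $\emptyset_{\mathbb B}$ empty blueprint; $\phi$ denotes $\varepsilon\mapsto\phi$; $@_\phi(\alpha_1,\alpha_2)$ ($\alpha_i$ non-empty) has root $@_\phi$ and $\alpha_i$ at $(i)$; for pairwise incomparable $\bar a=(a_1,\dots,a_k)$, $*_{\bar a}(\alpha_1,\dots,\alpha_k)$ is the blueprint of minimal domain with restriction $\alpha_i$ at $a_i$; $*(\alpha_1,\dots,\alpha_k)=*_{((1),\dots,(k))}(\dots)$. The stable part of $M\in\Lambda_{\mathrm{NF}}$ is the set of $a\in\mathrm{dom}(M)$ with $\mathrm{Free}(M|_a)\subseteq\mathrm{Free}(M)$ and $M|_a$ a variable or an application. The blueprint of $M$ maps each $a$ in the stable part to $\psi$ if $M|_a$ is a variable of type $\psi$, and to $@_\psi$ if $M|_a$ is an application of type $\psi$. Extraction $\alpha\rhd^a_\phi\beta$: (1) $\phi\rhd^\varepsilon_\phi\emptyset_{\mathbb B}$; (2) if $\alpha\rhd^a_\phi\beta$ ($\gamma,\alpha$ non-empty) then $@_\psi(\gamma,\alpha)\rhd^{(2)\cdot a}_\phi*(\gamma,\beta)$; (3) if $\alpha\rhd^a_\phi\beta$, $b\ne\varepsilon$, $(b,c_1,\dots,c_k)$ pairwise incomparable, then $*_{(b,c_1,\dots,c_k)}(\alpha,\gamma_1,\dots,\gamma_k)\rhd^{b\cdot a}_\phi*_{(b,c_1,\dots,c_k)}(\beta,\gamma_1,\dots,\gamma_k)$.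 Write $\alpha\rhd_\phi\beta$ if $\alpha\rhd^a_\phi\beta$ for some $a$, and $\rhd^+_\phi$ for its transitive closure. $\mathbb F(\alpha)$ is the set of sequences $(\phi_1,\dots,\phi_n)$ ($n\ge0$) such that $\alpha\rhd^+_{\phi_n}\cdots\rhd^+_{\phi_1}\emptyset_{\mathbb B}$ (through some intermediate blueprints). *)

theory Defs
  imports Main "HOL-Library.Sublist"
begin

datatype 'a form = Atom 'a | Imp "'a form" "'a form"

text \<open>Pure lambda-terms over a variable type 'v (not identified up to alpha).\<close>
datatype 'v trm = Var 'v | Lam 'v "'v trm" | App "'v trm" "'v trm"

fun fv :: "'v trm \<Rightarrow> 'v set" where
  "fv (Var x) = {x}"
| "fv (Lam x M) = fv M - {x}"
| "fv (App M N) = fv M \<union> fv N"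

fun bvl :: "'v trm \<Rightarrow> 'v list" where
  "bvl (Var x) = []"
| "bvl (Lam x M) = x # bvl M"
| "bvl (App M N) = bvl M @ bvl N"

definition wfterm :: "'v trm \<Rightarrow> bool" where
  "wfterm M \<longleftrightarrow> distinct (bvl M) \<and> set (bvl M) \<inter> fv M = {}"

definition freelist :: "('v \<Rightarrow> nat) \<Rightarrow> 'v trm \<Rightarrow> 'v list" where
  "freelist ord M = (THE xs. set xs = fv M \<and> sorted_wrt (\<lambda>x y. ord x < ord y) xs)"

fun HRM :: "('v \<Rightarrow> nat) \<Rightarrow> 'v trm \<Rightarrow> bool" where
  "HRM ord (Var x) = True"
| "HRM ord (Lam x M) \<longleftrightarrow> HRM ord M \<and> x \<in> fv M \<and> (\<forall>y\<in>fv M. ord y \<le> ord x)"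
| "HRM ord (App M N) \<longleftrightarrow> HRM ord M \<and> HRM ord N \<and> (\<forall>y\<in>fv M. \<exists>z\<in>fv N. ord y \<le> ord z)"

inductive typed :: "('v \<Rightarrow> nat) \<Rightarrow> ('v \<Rightarrow> 'a form) \<Rightarrow> 'v trm \<Rightarrow> 'a form \<Rightarrow> bool"
  for ord :: "'v \<Rightarrow> nat" and \<Omega> :: "'v \<Rightarrow> 'a form" where
  tVar: "typed ord \<Omega> (Var x) (\<Omega> x)"
| tLam: "typed ord \<Omega> M \<psi> \<Longrightarrow> HRM ord (Lam x M) \<Longrightarrow> typed ord \<Omega> (Lam x M) (Imp (\<Omega> x) \<psi>)"
| tApp: "typed ord \<Omega> M (Imp \<chi> \<psi>) \<Longrightarrow> typed ord \<Omega> N \<chi> \<Longrightarrow> HRM ord (App M N) \<Longrightarrow>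
         typed ord \<Omega> (App M N) \<psi>"

fun beta_normal :: "'v trm \<Rightarrow> bool" where
  "beta_normal (Var x) = True"
| "beta_normal (Lam x M) = beta_normal M"
| "beta_normal (App (Lam x M) N) = False"
| "beta_normal (App M N) = (beta_normal M \<and> beta_normal N)"

definition in_LambdaNF :: "('v \<Rightarrow> nat) \<Rightarrow> ('v \<Rightarrow> 'a form) \<Rightarrow> 'v trm \<Rightarrow> bool" where
  "in_LambdaNF ord \<Omega> M \<longleftrightarrow> wfterm M \<and> (\<exists>\<psi>. typed ord \<Omega> M \<psi>) \<and> beta_normal M"

fun lams :: "'v list \<Rightarrow> 'v trm \<Rightarrow> 'v trm" where
  "lams [] M = M"
| "lams (y # ys) M = Lam y (lams ys M)"

type_synonym addr = "nat list"

fun sub :: "'v trm \<Rightarrow> addr \<Rightarrow> 'v trm option" where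
  "sub M [] = Some M"
| "sub (Lam x M) (k # a) = (if k = 1 then sub M a else None)"
| "sub (App M N) (k # a) = (if k = 1 then sub M a else if k = 2 then sub N a else None)"
| "sub (Var x) (k # a) = None"

datatype 'a sym = Fm "'a form" | AppS "'a form"

type_synonym 'a bp = "addr \<Rightarrow> 'a sym option"

definition at_addr :: "'a bp \<Rightarrow> addr \<Rightarrow> 'a bp" where
  "at_addr \<pi> a = (\<lambda>c. \<pi> (a @ c))"

definition is_bp :: "'a bp \<Rightarrow> bool" where
  "is_bp \<alpha> \<longleftrightarrow> finite (dom \<alpha>) \<and> (\<forall>a\<in>dom \<alpha>. \<forall>k\<in>set a. 0 < k) \<and>
     (\<forall>a \<phi>. \<alpha> a = Some (AppS \<phi>) \<longrightarrow>
        at_addr \<alpha> (a @ [1]) \<noteq> Map.empty \<and> at_addr \<alpha> (a @ [2]) \<noteq> Map.empty)"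

definition leaf :: "'a form \<Rightarrow> 'a bp" where
  "leaf \<phi> = [[] \<mapsto> Fm \<phi>]"

definition appbp :: "'a form \<Rightarrow> 'a bp \<Rightarrow> 'a bp \<Rightarrow> 'a bp" where
  "appbp \<psi> \<alpha>1 \<alpha>2 = (\<lambda>c. case c of [] \<Rightarrow> Some (AppS \<psi>)
       | k # d \<Rightarrow> (if k = 1 then \<alpha>1 d else if k = 2 then \<alpha>2 d else None))"

definition pairwise_incomparable :: "addr list \<Rightarrow> bool" where
  "pairwise_incomparable as \<longleftrightarrow>
     (\<forall>i<length as. \<forall>j<length as. i \<noteq> j \<longrightarrow> \<not> prefix (as ! i) (as ! j))"

text \<open>*_{as}(als): the blueprint of minimal domain whose restriction at as!i is als!i
  (as pairwise incomparable, same length as als).\<close>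
definition starbp :: "addr list \<Rightarrow> 'a bp list \<Rightarrow> 'a bp" where
  "starbp as als = (\<lambda>c. if \<exists>i<length as. prefix (as ! i) c
       then (let i = (SOME i. i < length as \<and> prefix (as ! i) c)
             in (als ! i) (drop (length (as ! i)) c))
       else None)"

definition starstd :: "'a bp list \<Rightarrow> 'a bp" where
  "starstd als = starbp (map (\<lambda>i. [Suc i]) [0..<length als]) als"

text \<open>Extraction  alpha \<rhd>^a_phi beta  is written  extr alpha a phi beta.\<close>
inductive extr :: "'a bp \<Rightarrow> addr \<Rightarrow> 'a form \<Rightarrow> 'a bp \<Rightarrow> bool" where
  ext_leaf: "extr (leaf \<phi>) [] \<phi> Map.empty"
| ext_app: "extr \<alpha> a \<phi> \<beta> \<Longrightarrow> is_bp \<gamma> \<Longrightarrow> \<gamma> \<noteq> Map.empty \<Longrightarrow> \<alpha> \<noteq> Map.empty \<Longrightarrow>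
            extr (appbp \<psi> \<gamma> \<alpha>) (2 # a) \<phi> (starstd [\<gamma>, \<beta>])"
| ext_star: "extr \<alpha> a \<phi> \<beta> \<Longrightarrow> b \<noteq> [] \<Longrightarrow> pairwise_incomparable (b # cs) \<Longrightarrow>
             length gs = length cs \<Longrightarrow> (\<forall>g\<in>set gs. is_bp g) \<Longrightarrow>
             extr (starbp (b # cs) (\<alpha> # gs)) (b @ a) \<phi> (starbp (b # cs) (\<beta> # gs))"

definition extr_any :: "'a form \<Rightarrow> 'a bp \<Rightarrow> 'a bp \<Rightarrow> bool" where
  "extr_any \<phi> \<alpha> \<beta> \<longleftrightarrow> (\<exists>a. extr \<alpha> a \<phi> \<beta>)"

fun extr_chain :: "'a bp \<Rightarrow> addr list \<Rightarrow> 'a form \<Rightarrow> 'a bp \<Rightarrow> bool" where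
  "extr_chain \<alpha> [] \<phi> \<beta> \<longleftrightarrow> \<alpha> = \<beta>"
| "extr_chain \<alpha> (a # as) \<phi> \<beta> \<longleftrightarrow> (\<exists>\<gamma>. extr \<alpha> a \<phi> \<gamma> \<and> extr_chain \<gamma> as \<phi> \<beta>)"

text \<open>F(alpha): (phi1,...,phin) with alpha \<rhd>+_{phin} ... \<rhd>+_{phi1} empty.\<close>
inductive inF :: "'a bp \<Rightarrow> 'a form list \<Rightarrow> bool" where
  inF_nil: "inF Map.empty []"
| inF_snoc: "(extr_any \<phi>)\<^sup>+\<^sup>+ \<alpha> \<beta> \<Longrightarrow> inF \<beta> \<phi>s \<Longrightarrow> inF \<alpha> (\<phi>s @ [\<phi>])"

definition FF :: "'a bp \<Rightarrow> 'a form list set" where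
  "FF \<alpha> = {\<phi>s. inF \<alpha> \<phi>s}"

definition blueprint :: "('v \<Rightarrow> nat) \<Rightarrow> ('v \<Rightarrow> 'a form) \<Rightarrow> 'v trm \<Rightarrow> 'a bp" where
  "blueprint ord \<Omega> M = (\<lambda>a. case sub M a of
      None \<Rightarrow> None
    | Some N \<Rightarrow> (if fv N \<subseteq> fv M then
        (case N of Var x \<Rightarrow> Some (Fm (THE \<psi>. typed ord \<Omega> N \<psi>))
                 | App _ _ \<Rightarrow> Some (AppS (THE \<psi>. typed ord \<Omega> N \<psi>))
                 | Lam _ _ \<Rightarrow> None)
        else None))"

definition restr_free :: "'v trm \<Rightarrow> 'a bp \<Rightarrow> 'v set \<Rightarrow> 'a bp" where
  "restr_free M \<alpha> V = \<alpha> |` {a. \<exists>N. sub M a = Some N \<and> fv N \<subseteq> V}"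

end

theory Submission
  imports Defs "HOL-Library.List_Lexorder"
begin


lemma starbp_at:
  assumes "pairwise_incomparable as" "i < length as" "prefix (as!i) c"
  shows "starbp as als c = (als!i) (drop (length (as!i)) c)"
proof -
  have u: "j = i" if "j < length as" "prefix (as!j) c" for j
  proof (rule ccontr)
    assume "j \<noteq> i"
    from prefix_same_cases[OF that(2) assms(3)] have "prefix (as!j) (as!i) \<or> prefix (as!i) (as!j)" .
    moreover have "\<not> prefix (as!j) (as!i)" "\<not> prefix (as!i) (as!j)"
      using assms(1,2) that(1) \<open>j \<noteq> i\<close> unfolding pairwise_incomparable_def by auto
    ultimately show False by blast
  qed
  have "(SOME j. j < length as \<and> prefix (as!j) c) = i"
  proof (rule some_equality)
    show "i < length as \<and> prefix (as!i) c" using assms by simp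
  next
    fix j assume "j < length as \<and> prefix (as ! j) c"
    then show "j = i" using u by blast
  qed
  then show ?thesis using assms unfolding starbp_def by (auto simp: Let_def)
qed

lemma starbp_none: "\<not>(\<exists>i<length as. prefix (as!i) c) \<Longrightarrow> starbp as als c = None"
  unfolding starbp_def by auto

lemma starbp2:
  assumes "k \<noteq> k'"
  shows "starbp [[k],[k']] [g,h] c = (case c of [] \<Rightarrow> None | j#d \<Rightarrow> if j = k then g d else if j = k' then h d else None)"
proof -
  have pi: "pairwise_incomparable [[k],[k']]" using assms
    by (auto simp: pairwise_incomparable_def less_Suc_eq)
  show ?thesis
  proof (cases c)
    case Nil then show ?thesis by (auto intro!: starbp_none simp: less_Suc_eq)
  next
    case (Cons j d)
    show ?thesis
    proof (cases "j = k")
      case True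
      then show ?thesis using starbp_at[OF pi, of 0 c "[g,h]"] Cons by simp
    next
      case False
      show ?thesis
      proof (cases "j = k'")
        case True
        then show ?thesis using starbp_at[OF pi, of 1 c "[g,h]"] Cons False by simp
      next
        case False2: False
        then show ?thesis using False Cons by (auto intro!: starbp_none simp: less_Suc_eq)
      qed
    qed
  qed
qed

lemma starstd2: "starstd [g,h] c = (case c of [] \<Rightarrow> None | j#d \<Rightarrow> if j = 1 then g d else if j = 2 then h d else None)"
proof -
  have "starstd [g,h] = starbp [[1],[2]] [g,h]"
    unfolding starstd_def by (simp add: eval_nat_numeral)
  then show ?thesis using starbp2[of 1 2 g h c] by simp
qed

lemma extr_det: "extr \<tau> a \<phi> \<beta> \<Longrightarrow> \<beta> = \<tau> |` {c. \<not> prefix c a}"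
proof (induction rule: extr.induct)
  case (ext_leaf \<phi>)
  then show ?case by (auto simp: leaf_def restrict_map_def fun_eq_iff)
next
  case (ext_app \<alpha> a \<phi> \<beta> \<gamma> \<psi>)
  show ?case
  proof
    fix c
    show "starstd [\<gamma>, \<beta>] c = (appbp \<psi> \<gamma> \<alpha> |` {c. \<not> prefix c (2 # a)}) c"
      unfolding starstd2 ext_app.IH
      by (cases c) (auto simp: appbp_def restrict_map_def)
  qed
next
  case (ext_star \<alpha> a \<phi> \<beta> b cs gs)
  show ?case
  proof
    fix c
    show "starbp (b # cs) (\<beta> # gs) c = (starbp (b # cs) (\<alpha> # gs) |` {c. \<not> prefix c (b @ a)}) c"
    proof (cases "\<exists>i<length (b#cs). prefix ((b#cs)!i) c")
      case True
      then obtain i where i: "i < length (b#cs)" "prefix ((b#cs)!i) c" by blast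
      show ?thesis
      proof (cases i)
        case 0
        then obtain d where d: "c = b @ d" using i by (auto simp: prefix_def)
        show ?thesis using starbp_at[OF ext_star.hyps(3) i, of "\<beta>#gs"] starbp_at[OF ext_star.hyps(3) i, of "\<alpha>#gs"]
          0 d ext_star.IH by (auto simp: restrict_map_def)
      next
        case (Suc j)
        have np: "\<not> prefix c (b @ a)"
        proof
          assume "prefix c (b @ a)"
          then have p1: "prefix ((b#cs)!i) (b@a)" using i(2) prefix_order.trans by blast
          have p2: "prefix ((b#cs)!0) (b@a)" by simp
          from prefix_same_cases[OF p1 p2] ext_star.hyps(3) i(1) Suc show False
            unfolding pairwise_incomparable_def by (metis length_greater_0_conv list.discI nat.distinct(1))
        qed
        show ?thesis using starbp_at[OF ext_star.hyps(3) i, of "\<beta>#gs"] starbp_at[OF ext_star.hyps(3) i, of "\<alpha>#gs"]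
          Suc np by (auto simp: restrict_map_def)
      qed
    next
      case False
      then show ?thesis by (simp add: starbp_none restrict_map_def)
    qed
  qed
qed

lemma extr_chain_det: "extr_chain \<tau> as \<phi> \<beta> \<Longrightarrow> \<beta> = \<tau> |` {c. \<forall>b\<in>set as. \<not> prefix c b}"
proof (induction as arbitrary: \<tau>)
  case Nil then show ?case by simp
next
  case (Cons a as)
  then obtain \<gamma> where "extr \<tau> a \<phi> \<gamma>" "extr_chain \<gamma> as \<phi> \<beta>" by auto
  then have g: "\<gamma> = \<tau> |` {c. \<not> prefix c a}" and b: "\<beta> = \<gamma> |` {c. \<forall>b\<in>set as. \<not> prefix c b}"
    using extr_det Cons.IH by blast+
  show ?case unfolding b g by (auto simp: restrict_map_def fun_eq_iff)
qed

lemma is_bp_sub: "is_bp \<tau> \<Longrightarrow> is_bp (at_addr \<tau> c)"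
proof -
  assume b: "is_bp \<tau>"
  have "dom (at_addr \<tau> c) = (\<lambda>d. c @ d) -` dom \<tau>" by (auto simp: at_addr_def)
  moreover have "finite ((\<lambda>d. c @ d) -` dom \<tau>)" using b by (intro finite_vimageI) (auto simp: is_bp_def inj_on_def)
  ultimately have "finite (dom (at_addr \<tau> c))" by simp
  moreover have "\<forall>a\<in>dom (at_addr \<tau> c). \<forall>k\<in>set a. 0 < k"
  proof (intro ballI)
    fix a k assume "a \<in> dom (at_addr \<tau> c)" "k \<in> set a"
    then have "c@a \<in> dom \<tau>" "k \<in> set (c@a)" by (auto simp: at_addr_def)
    with b show "0<k" by (auto simp: is_bp_def)
  qed
  moreover have "\<forall>a \<phi>. at_addr \<tau> c a = Some (AppS \<phi>) \<longrightarrow>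
        at_addr (at_addr \<tau> c) (a @ [1]) \<noteq> Map.empty \<and> at_addr (at_addr \<tau> c) (a @ [2]) \<noteq> Map.empty"
    using b unfolding is_bp_def at_addr_def by (metis append.assoc)
  ultimately show ?thesis unfolding is_bp_def by blast
qed

lemma dom12: "\<forall>c\<in>dom \<tau>. set c \<subseteq> {1,2} \<Longrightarrow> j \<noteq> 1 \<Longrightarrow> j \<noteq> 2 \<Longrightarrow> \<tau> (j#d) = None"
proof (rule ccontr)
  assume "\<forall>c\<in>dom \<tau>. set c \<subseteq> {1,2}" "j \<noteq> 1" "j \<noteq> 2" "\<tau> (j#d) \<noteq> None"
  then have "set (j#d) \<subseteq> {1,2}" by blast
  with \<open>j \<noteq> 1\<close> \<open>j \<noteq> 2\<close> show False by simp
qed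

lemma extr_constr:
  assumes "\<tau> a = Some (Fm \<phi>)"
    and "\<forall>d. d \<noteq> [] \<longrightarrow> \<tau> (a @ d) = None"
    and "\<forall>p k r. a = p @ k # r \<longrightarrow> \<tau> p \<noteq> None \<longrightarrow> k = 2 \<and> (\<exists>\<psi>. \<tau> p = Some (AppS \<psi>)) \<and> at_addr \<tau> (p @ [1]) \<noteq> Map.empty"
    and "is_bp \<tau>"
    and "\<forall>c\<in>dom \<tau>. set c \<subseteq> {1,2}"
  shows "extr \<tau> a \<phi> (\<tau> |` {c. \<not> prefix c a})"
  using assms
proof (induction a arbitrary: \<tau>)
  case Nil
  have "\<tau> = leaf \<phi>"
  proof
    fix c show "\<tau> c = leaf \<phi> c" using Nil(1,2) by (cases c) (auto simp: leaf_def)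
  qed
  moreover have "\<tau> |` {c. \<not> prefix c []} = Map.empty" using Nil(2) by (auto simp: restrict_map_def fun_eq_iff)
  ultimately show ?case using ext_leaf by metis
next
  case (Cons k r)
  let ?\<alpha> = "at_addr \<tau> [k]"
  have IH: "extr ?\<alpha> r \<phi> (?\<alpha> |` {c. \<not> prefix c r})"
  proof (rule Cons.IH)
    show "?\<alpha> r = Some (Fm \<phi>)" using Cons.prems(1) by (simp add: at_addr_def)
    show "\<forall>d. d \<noteq> [] \<longrightarrow> ?\<alpha> (r @ d) = None" using Cons.prems(2) by (simp add: at_addr_def)
    show "\<forall>p ka ra. r = p @ ka # ra \<longrightarrow> ?\<alpha> p \<noteq> None \<longrightarrow> ka = 2 \<and> (\<exists>\<psi>. ?\<alpha> p = Some (AppS \<psi>)) \<and> at_addr ?\<alpha> (p @ [1]) \<noteq> Map.empty"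
    proof (intro allI impI)
      fix p ka ra assume h: "r = p @ ka # ra" "?\<alpha> p \<noteq> None"
      have "k # r = (k#p) @ ka # ra" using h by simp
      from Cons.prems(3)[rule_format, OF this] h(2) show "ka = 2 \<and> (\<exists>\<psi>. ?\<alpha> p = Some (AppS \<psi>)) \<and> at_addr ?\<alpha> (p @ [1]) \<noteq> Map.empty"
        by (simp add: at_addr_def)
    qed
    show "is_bp ?\<alpha>" using Cons.prems(4) by (rule is_bp_sub)
    show "\<forall>c\<in>dom ?\<alpha>. set c \<subseteq> {1, 2}"
    proof
      fix c assume "c \<in> dom ?\<alpha>"
      then have "k#c \<in> dom \<tau>" by (auto simp: at_addr_def)
      then have "set (k#c) \<subseteq> {1,2}" using Cons.prems(5) by blast
      then show "set c \<subseteq> {1,2}" by simp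
    qed
  qed
  have k12: "k = 1 \<or> k = 2"
  proof -
    have "k#r \<in> dom \<tau>" using Cons.prems(1) by auto
    then have "set (k#r) \<subseteq> {1,2}" using Cons.prems(5) by blast
    then show ?thesis by simp
  qed
  show ?case
  proof (cases "\<tau> [] = None")
    case False
    from Cons.prems(3)[rule_format, of "[]" k r] False obtain \<psi> where
      k2: "k = 2" and r: "\<tau> [] = Some (AppS \<psi>)" and ne: "at_addr \<tau> [1] \<noteq> Map.empty" by auto
    have teq: "\<tau> = appbp \<psi> (at_addr \<tau> [1]) (at_addr \<tau> [2])"
    proof
      fix c show "\<tau> c = appbp \<psi> (at_addr \<tau> [1]) (at_addr \<tau> [2]) c"
      proof (cases c)
        case Nil then show ?thesis using r by (simp add: appbp_def)
      next
        case (Cons j d)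
        then show ?thesis using dom12[OF Cons.prems(5)] by (auto simp: appbp_def at_addr_def)
      qed
    qed
    have ane: "at_addr \<tau> [2] \<noteq> Map.empty" using Cons.prems(1) k2 by (auto simp: at_addr_def fun_eq_iff)
    have "extr (appbp \<psi> (at_addr \<tau> [1]) (at_addr \<tau> [2])) (2 # r) \<phi>
           (starstd [at_addr \<tau> [1], at_addr \<tau> [2] |` {c. \<not> prefix c r}])"
      using ext_app[OF IH[unfolded k2] is_bp_sub[OF Cons.prems(4)] ne ane] .
    moreover have "starstd [at_addr \<tau> [1], at_addr \<tau> [2] |` {c. \<not> prefix c r}] = \<tau> |` {c. \<not> prefix c (2#r)}"
    proof
      fix c show "starstd [at_addr \<tau> [1], at_addr \<tau> [2] |` {c. \<not> prefix c r}] c = (\<tau> |` {c. \<not> prefix c (2#r)}) c"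
        unfolding starstd2
        using r dom12[OF Cons.prems(5)] by (cases c) (auto simp: at_addr_def restrict_map_def)
    qed
    ultimately show ?thesis by (simp only: teq[symmetric] k2)
  next
    case True
    define k' where "k' = 3 - k"
    have kk: "k \<noteq> k'" "k' \<noteq> 0" using k12 by (auto simp: k'_def)
    have teq: "\<tau> = starbp [[k],[k']] [?\<alpha>, at_addr \<tau> [k']]"
    proof
      fix c show "\<tau> c = starbp [[k],[k']] [?\<alpha>, at_addr \<tau> [k']] c"
        unfolding starbp2[OF kk(1)] using True dom12[OF Cons.prems(5)] k12
        by (cases c) (auto simp: at_addr_def k'_def)
    qed
    have pi: "pairwise_incomparable ([k] # [[k']])" using kk
      by (auto simp: pairwise_incomparable_def less_Suc_eq)
    have "extr (starbp ([k] # [[k']]) (?\<alpha> # [at_addr \<tau> [k']])) ([k] @ r) \<phi>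
            (starbp ([k] # [[k']]) ((?\<alpha> |` {c. \<not> prefix c r}) # [at_addr \<tau> [k']]))"
      by (rule ext_star[OF IH]) (use pi is_bp_sub[OF Cons.prems(4)] in auto)
    moreover have "starbp ([k] # [[k']]) ((?\<alpha> |` {c. \<not> prefix c r}) # [at_addr \<tau> [k']]) = \<tau> |` {c. \<not> prefix c (k#r)}"
    proof
      fix c show "starbp ([k] # [[k']]) ((?\<alpha> |` {c. \<not> prefix c r}) # [at_addr \<tau> [k']]) c = (\<tau> |` {c. \<not> prefix c (k#r)}) c"
        unfolding starbp2[OF kk(1)] using True dom12[OF Cons.prems(5)] k12 kk
        by (cases c) (auto simp: at_addr_def restrict_map_def k'_def)
    qed
    ultimately show ?thesis by (simp only: teq[symmetric] append_Cons append_Nil)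
  qed
qed



lemma sub_append: "sub M a = Some N \<Longrightarrow> sub M (a@c) = sub N c"
  by (induction M a rule: sub.induct) (auto split: if_splits)

lemma sub_var_ext: "sub M a = Some (Var x) \<Longrightarrow> c \<noteq> [] \<Longrightarrow> sub M (a@c) = None"
  by (cases c) (auto simp: sub_append)

lemma sub_12: "sub M a \<noteq> None \<Longrightarrow> set a \<subseteq> {1,2}"
  by (induction M a rule: sub.induct) (auto split: if_splits)

lemma finite_sub: "finite {a. sub M a \<noteq> None}"
proof (induction M)
  case (Var x)
  have "{a. sub (Var x) a \<noteq> None} \<subseteq> {[]}" by (auto elim: sub.elims)
  then show ?case using finite_subset by blast
next
  case (Lam x M)
  have "{a. sub (Lam x M) a \<noteq> None} \<subseteq> insert [] (Cons 1 ` {a. sub M a \<noteq> None})"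
  proof
    fix a assume "a \<in> {a. sub (Lam x M) a \<noteq> None}"
    then show "a \<in> insert [] (Cons 1 ` {a. sub M a \<noteq> None})"
      by (cases a) (auto split: if_splits)
  qed
  then show ?case using finite_subset Lam by blast
next
  case (App M N)
  have "{a. sub (App M N) a \<noteq> None} \<subseteq> insert [] (Cons 1 ` {a. sub M a \<noteq> None} \<union> Cons 2 ` {a. sub N a \<noteq> None})"
  proof
    fix a assume "a \<in> {a. sub (App M N) a \<noteq> None}"
    then show "a \<in> insert [] (Cons 1 ` {a. sub M a \<noteq> None} \<union> Cons 2 ` {a. sub N a \<noteq> None})"
      by (cases a) (auto split: if_splits)
  qed
  then show ?case using finite_subset App by blast
qed

lemma fv_occ: "x \<in> fv N \<Longrightarrow> \<exists>d. sub N d = Some (Var x)"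
proof (induction N)
  case (Var y) then show ?case by (auto intro: exI[of _ "[]"])
next
  case (Lam y M)
  then obtain d where "sub M d = Some (Var x)" by auto
  then show ?case by (auto intro: exI[of _ "1#d"])
next
  case (App M N)
  show ?case
  proof (cases "x \<in> fv M")
    case True
    with App obtain d where "sub M d = Some (Var x)" by auto
    then show ?thesis by (auto intro: exI[of _ "1#d"])
  next
    case False
    with App obtain d where "sub N d = Some (Var x)" by auto
    then show ?thesis by (auto intro: exI[of _ "2#d"])
  qed
qed

lemma occ_fv: "sub N d = Some (Var x) \<Longrightarrow> x \<notin> set (bvl N) \<Longrightarrow> x \<in> fv N"
  by (induction N d rule: sub.induct) (auto split: if_splits)

lemma sub_bvl: "sub M a = Some N \<Longrightarrow> set (bvl N) \<subseteq> set (bvl M)"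
  by (induction M a rule: sub.induct) (auto split: if_splits)

lemma sub_fv_App: "sub M a = Some (App P Q) \<Longrightarrow> sub M (a@[1]) = Some P \<and> sub M (a@[2]) = Some Q"
  by (simp add: sub_append)

inductive_cases typedLamE: "typed ord \<Omega> (Lam x M) \<psi>"
inductive_cases typedAppE: "typed ord \<Omega> (App M N) \<psi>"
inductive_cases typedVarE: "typed ord \<Omega> (Var x) \<psi>"

lemma sub_typed: "typed ord \<Omega> M \<psi> \<Longrightarrow> sub M a = Some N \<Longrightarrow> \<exists>\<psi>'. typed ord \<Omega> N \<psi>'"
proof (induction M a arbitrary: \<psi> rule: sub.induct)
  case (1 M) then show ?case by auto
next
  case (2 x M k a)
  then show ?case by (auto split: if_splits elim: typedLamE)
next
  case (3 M N k a)
  then show ?case by (auto split: if_splits elim!: typedAppE)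
next
  case (4 x k a) then show ?case by simp
qed

lemma typed_HRM: "typed ord \<Omega> N \<psi> \<Longrightarrow> HRM ord N"
  by (cases rule: typed.cases) auto

lemma the_typed_Var: "(THE \<psi>. typed ord \<Omega> (Var x) \<psi>) = \<Omega> x"
  by (rule the_equality) (auto intro: typed.tVar elim: typedVarE)

lemma bn_App: "beta_normal (App P Q) \<Longrightarrow> beta_normal P \<and> beta_normal Q \<and> (\<forall>y L. P \<noteq> Lam y L)"
  by (cases P) auto

lemma sub_bn: "beta_normal M \<Longrightarrow> sub M a = Some N \<Longrightarrow> beta_normal N"
proof (induction M a rule: sub.induct)
  case (3 M N k a)
  then show ?case using bn_App[of M N] by (auto split: if_splits)
qed (auto split: if_splits)

lemma head_var: "beta_normal P \<Longrightarrow> (\<forall>y L. P \<noteq> Lam y L) \<Longrightarrow> \<exists>k z. sub P (replicate k 1) = Some (Var z) \<and> z \<in> fv P"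
proof (induction P)
  case (Var x)
  then show ?case by (auto intro: exI[of _ 0])
next
  case (Lam x P) then show ?case by auto
next
  case (App P Q)
  from bn_App[OF App.prems(1)] App.IH(1) obtain k z where "sub P (replicate k 1) = Some (Var z)" "z \<in> fv P" by auto
  then show ?case by (auto intro!: exI[of _ "Suc k"])
qed

lemma fv_nonempty: "beta_normal P \<Longrightarrow> (\<forall>y L. P \<noteq> Lam y L) \<Longrightarrow> fv P \<noteq> {}"
  using head_var by fastforce

lemma finite_fv: "finite (fv M)"
  by (induction M) auto

lemma lex_lt: "(p @ 1 # u) < (p @ 2 # (v::nat list))"
  by (induction p) auto

lemma sub_lams: "sub (lams ys M) (replicate (length ys) 1 @ a) = sub M a"
  by (induction ys) auto

lemma sub_lams_other: "\<not>(\<exists>a. c = replicate (length ys) 1 @ a) \<Longrightarrow> sub (lams ys M) c = None \<or> (\<exists>y L. sub (lams ys M) c = Some (Lam y L))"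
proof (induction ys arbitrary: c)
  case Nil then show ?case by simp
next
  case (Cons y ys)
  show ?case
  proof (cases c)
    case Nil then show ?thesis by simp
  next
    case (Cons k d)
    show ?thesis
    proof (cases "k = 1")
      case True
      have "\<not>(\<exists>a. d = replicate (length ys) 1 @ a)" using Cons.prems Cons True by auto
      from Cons.IH[OF this] show ?thesis using Cons True by simp
    qed (use Cons in simp)
  qed
qed

lemma fv_lams: "fv (lams ys M) = fv M - set ys"
  by (induction ys) auto

lemma chain_trancl: "extr_chain \<tau> (a#as) \<phi> \<beta> \<Longrightarrow> (extr_any \<phi>)\<^sup>+\<^sup>+ \<tau> \<beta>"
proof (induction as arbitrary: \<tau> a)
  case Nil then show ?case by (auto simp: extr_any_def)
next
  case (Cons b as)
  then obtain \<gamma> where "extr \<tau> a \<phi> \<gamma>" "extr_chain \<gamma> (b#as) \<phi> \<beta>" by auto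
  with Cons.IH show ?case by (meson extr_any_def tranclp.r_into_trancl tranclp_trans)
qed

lemma restr_upclosed:
  assumes "is_bp \<tau>" "\<forall>q d. q \<in> R \<longrightarrow> prefix q d \<longrightarrow> d \<in> R"
  shows "is_bp (\<tau> |` R)"
  unfolding is_bp_def
proof (intro conjI allI impI ballI)
  show "finite (dom (\<tau> |` R))" using assms(1) by (auto simp: is_bp_def)
next
  fix a k assume "a \<in> dom (\<tau> |` R)" "k \<in> set a"
  then show "0 < k" using assms(1) unfolding is_bp_def by (metis dom_restrict IntD1)
next
  fix a \<phi> assume h: "(\<tau> |` R) a = Some (AppS \<phi>)"
  then have aR: "a \<in> R" and t: "\<tau> a = Some (AppS \<phi>)" by (auto simp: restrict_map_def split: if_splits)
  have "at_addr (\<tau> |` R) (a @ [j]) \<noteq> Map.empty" if "at_addr \<tau> (a @ [j]) \<noteq> Map.empty" for j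
  proof -
    from that obtain d where "\<tau> (a @ [j] @ d) \<noteq> None" by (auto simp: at_addr_def fun_eq_iff)
    moreover have "a @ [j] @ d \<in> R" using assms(2) aR by (metis prefix_def)
    ultimately show ?thesis by (auto simp: at_addr_def fun_eq_iff restrict_map_def)
  qed
  then show "at_addr (\<tau> |` R) (a @ [1]) \<noteq> Map.empty" "at_addr (\<tau> |` R) (a @ [2]) \<noteq> Map.empty"
    using assms(1) t unfolding is_bp_def by auto
qed



definition bpnode :: "('v \<Rightarrow> nat) \<Rightarrow> ('v \<Rightarrow> 'a form) \<Rightarrow> 'v trm \<Rightarrow> 'a sym option" where
  "bpnode ord \<Omega> N = (case N of Var x \<Rightarrow> Some (Fm (THE \<psi>. typed ord \<Omega> N \<psi>))
      | App _ _ \<Rightarrow> Some (AppS (THE \<psi>. typed ord \<Omega> N \<psi>)) | Lam _ _ \<Rightarrow> None)"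

lemma blueprint_eq: "blueprint ord \<Omega> L c = (case sub L c of None \<Rightarrow> None | Some N \<Rightarrow> if fv N \<subseteq> fv L then bpnode ord \<Omega> N else None)"
  by (simp add: blueprint_def bpnode_def split: option.split)

lemma restr_eq: "V \<subseteq> fv M \<Longrightarrow> restr_free M (blueprint ord \<Omega> M) V c =
   (case sub M c of None \<Rightarrow> None | Some N \<Rightarrow> if fv N \<subseteq> V then bpnode ord \<Omega> N else None)"
  by (auto simp: restr_free_def restrict_map_def blueprint_eq split: option.split)

lemma bpnode_None: "bpnode ord \<Omega> N = None \<longleftrightarrow> (\<exists>y L. N = Lam y L)"
  by (cases N) (auto simp: bpnode_def)

lemma freelist_props:
  assumes inj: "inj ord"
  shows "set (freelist ord M) = fv M \<and> sorted_wrt (\<lambda>x y. ord x < ord y) (freelist ord M)"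
proof -
  obtain L where L: "sorted_wrt (<) L" "set L = ord ` fv M"
    and Lu: "\<And>ys. sorted_wrt (<) ys \<and> set ys = ord ` fv M \<Longrightarrow> ys = L"
    using ex1_sorted_list_for_set_if_finite[of "ord ` fv M"] finite_fv[of M] by (metis finite_imageI)
  let ?L = "map (inv ord) L"
  have mo: "map ord ?L = L"
    unfolding map_map by (rule map_idI) (use L(2) in \<open>auto simp: f_inv_into_f\<close>)
  have P: "set ?L = fv M \<and> sorted_wrt (\<lambda>x y. ord x < ord y) ?L"
  proof
    show "set ?L = fv M" using L(2) inj by (simp add: image_image)
    show "sorted_wrt (\<lambda>x y. ord x < ord y) ?L" using L(1) mo by (metis sorted_wrt_map)
  qed
  have U: "ys = ?L" if "set ys = fv M \<and> sorted_wrt (\<lambda>x y. ord x < ord y) ys" for ys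
  proof -
    have "sorted_wrt (<) (map ord ys) \<and> set (map ord ys) = ord ` fv M" using that by (simp add: sorted_wrt_map)
    then have "map ord ys = L" by (rule Lu)
    then have "map ord ys = map ord ?L" using mo by argo
    then show ?thesis using inj_map_eq_map[OF inj] by blast
  qed
  have "freelist ord M = ?L" unfolding freelist_def by (rule the_equality) (use P U in blast)+
  with P show ?thesis by simp
qed

locale lctx =
  fixes ord :: "'v \<Rightarrow> nat" and \<Omega> :: "'v \<Rightarrow> 'a form" and M :: "'v trm"
  assumes inj: "inj ord" and NF: "in_LambdaNF ord \<Omega> M"
begin

abbreviation "A V \<equiv> restr_free M (blueprint ord \<Omega> M) V"

lemma wf: "set (bvl M) \<inter> fv M = {}" and bnM: "beta_normal M" and tyM: "\<exists>\<psi>. typed ord \<Omega> M \<psi>"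
  using NF by (auto simp: in_LambdaNF_def wfterm_def)

lemma sub_HRM: "sub M a = Some N \<Longrightarrow> HRM ord N"
  using tyM sub_typed typed_HRM by metis

lemma sub_bnM: "sub M a = Some N \<Longrightarrow> beta_normal N"
  using bnM sub_bn by metis

lemma notbound: "x \<in> fv M \<Longrightarrow> sub M a = Some N \<Longrightarrow> x \<notin> set (bvl N)"
  using wf sub_bvl by blast

lemma occ_iff:
  assumes "x \<in> fv M" "sub M c = Some N"
  shows "x \<in> fv N \<longleftrightarrow> (\<exists>oc. sub M oc = Some (Var x) \<and> prefix c oc)"
proof
  assume "x \<in> fv N"
  then obtain d where "sub N d = Some (Var x)" using fv_occ by metis
  then show "\<exists>oc. sub M oc = Some (Var x) \<and> prefix c oc" using assms(2) sub_append by (metis prefixI)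
next
  assume "\<exists>oc. sub M oc = Some (Var x) \<and> prefix c oc"
  then obtain d where "sub M (c@d) = Some (Var x)" by (auto simp: prefix_def)
  then have "sub N d = Some (Var x)" using assms(2) sub_append by metis
  then show "x \<in> fv N" using occ_fv notbound[OF assms] by metis
qed

lemma A_Var: "V \<subseteq> fv M \<Longrightarrow> sub M c = Some (Var x) \<Longrightarrow> x \<in> V \<Longrightarrow> A V c = Some (Fm (\<Omega> x))"
  by (simp add: restr_eq bpnode_def the_typed_Var)

lemma A_App: "V \<subseteq> fv M \<Longrightarrow> sub M c = Some (App P Q) \<Longrightarrow> fv (App P Q) \<subseteq> V \<Longrightarrow> \<exists>\<psi>. A V c = Some (AppS \<psi>)"
  by (simp add: restr_eq bpnode_def)

lemma A_Some: "V \<subseteq> fv M \<Longrightarrow> A V c \<noteq> None \<Longrightarrow> \<exists>N. sub M c = Some N \<and> fv N \<subseteq> V \<and> (\<forall>y L. N \<noteq> Lam y L)"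
  by (auto simp: restr_eq bpnode_def split: option.splits if_splits)

lemma A_isbp: assumes V: "V \<subseteq> fv M" shows "is_bp (A V)"
  unfolding is_bp_def
proof (intro conjI allI impI ballI)
  have "dom (A V) \<subseteq> {a. sub M a \<noteq> None}" using A_Some[OF V] by fastforce
  then show "finite (dom (A V))" using finite_sub finite_subset by blast
next
  fix a k assume "a \<in> dom (A V)" "k \<in> set a"
  then have "set a \<subseteq> {1,2}" using A_Some[OF V] sub_12 by blast
  then show "0 < k" using \<open>k \<in> set a\<close> by auto
next
  fix a \<phi> assume h: "A V a = Some (AppS \<phi>)"
  then obtain N where N: "sub M a = Some N" "fv N \<subseteq> V" using A_Some[OF V] by blast
  have "bpnode ord \<Omega> N = Some (AppS \<phi>)" using h N V by (simp add: restr_eq)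
  then obtain P Q where NPQ: "N = App P Q" by (cases N) (auto simp: bpnode_def)
  have bnP: "beta_normal P" "\<forall>y L. P \<noteq> Lam y L" using bn_App sub_bnM[OF N(1)] NPQ by auto
  obtain k z where kz: "sub P (replicate k 1) = Some (Var z)" "z \<in> fv P" using head_var[OF bnP] by blast
  have "sub M (a @ [1] @ replicate k 1) = Some (Var z)" using N(1) NPQ kz by (simp add: sub_append)
  moreover have "z \<in> V" using N(2) NPQ kz by auto
  ultimately have "A V (a @ [1] @ replicate k 1) \<noteq> None" using A_Var[OF V] by simp
  then show "at_addr (A V) (a @ [1]) \<noteq> Map.empty" by (auto simp: at_addr_def fun_eq_iff)
  have "HRM ord N" using sub_HRM N by blast
  then obtain w where w: "w \<in> fv Q" using kz NPQ by auto
  then obtain d where d: "sub Q d = Some (Var w)" using fv_occ by metis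
  have "sub M (a @ [2] @ d) = Some (Var w)" using N(1) NPQ d by (simp add: sub_append)
  moreover have "w \<in> V" using N(2) NPQ w by auto
  ultimately have "A V (a @ [2] @ d) \<noteq> None" using A_Var[OF V] by simp
  then show "at_addr (A V) (a @ [2]) \<noteq> Map.empty" by (auto simp: at_addr_def fun_eq_iff)
qed

lemma A_empty: "A {} = Map.empty"
proof
  fix c show "A {} c = None"
  proof (cases "sub M c")
    case (Some N)
    show ?thesis
    proof (cases N)
      case (Var x) then show ?thesis using Some by (simp add: restr_eq)
    next
      case (Lam y L) then show ?thesis using Some by (simp add: restr_eq bpnode_def)
    next
      case (App P Q)
      have "fv N \<noteq> {}" using fv_nonempty[OF sub_bnM[OF Some]] App by auto
      then show ?thesis using Some by (simp add: restr_eq)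
    qed
  qed (simp add: restr_eq)
qed

lemma A_full: "A (fv M) = blueprint ord \<Omega> M"
  by (rule ext) (simp add: restr_eq blueprint_eq)

end


context lctx begin

definition tau :: "'v set \<Rightarrow> addr set \<Rightarrow> 'a bp" where
  "tau V E = A V |` {c. \<forall>e\<in>E. \<not> prefix c e}"

lemma tau_empty: "tau V {} = A V"
  by (simp add: tau_def restrict_map_def)

lemma ext_step:
  assumes V: "V \<subseteq> fv M" and xV: "x \<in> V" and xmax: "\<forall>y\<in>V. ord y \<le> ord x"
    and Oc_def: "Oc = {oc. sub M oc = Some (Var x)}"
    and E: "E \<subseteq> Oc" and oc: "oc \<in> Oc - E" and ocmax: "\<forall>o'\<in>Oc - E. o' \<le> oc"
  shows "extr (tau V E) oc (\<Omega> x) (tau V (insert oc E))"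
proof -
  let ?R = "{c. \<forall>e\<in>E. \<not> prefix c e}"
  have ocsub: "sub M oc = Some (Var x)" using oc Oc_def by auto
  have Rup: "\<forall>q d. q \<in> ?R \<longrightarrow> prefix q d \<longrightarrow> d \<in> ?R"
    by (auto dest: prefix_order.trans)
  have C1: "tau V E oc = Some (Fm (\<Omega> x))"
  proof -
    have "oc \<in> ?R"
    proof (clarsimp)
      fix e assume "e \<in> E" "prefix oc e"
      then obtain d where d: "e = oc @ d" by (auto simp: prefix_def)
      have "e \<noteq> oc" using oc \<open>e \<in> E\<close> by auto
      then have "d \<noteq> []" using d by auto
      then have "sub M e = None" using sub_var_ext[OF ocsub] d by simp
      moreover have "sub M e \<noteq> None" using E \<open>e \<in> E\<close> Oc_def by auto
      ultimately show False by simp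
    qed
    then show ?thesis using A_Var[OF V ocsub xV] by (simp add: tau_def)
  qed
  have C2: "\<forall>d. d \<noteq> [] \<longrightarrow> tau V E (oc @ d) = None"
    using sub_var_ext[OF ocsub] V by (simp add: tau_def restrict_map_def restr_eq)
  have C3: "\<forall>p k r. oc = p @ k # r \<longrightarrow> tau V E p \<noteq> None \<longrightarrow> k = 2 \<and> (\<exists>\<psi>. tau V E p = Some (AppS \<psi>)) \<and> at_addr (tau V E) (p @ [1]) \<noteq> Map.empty"
  proof (intro allI impI)
    fix p k r assume ocp: "oc = p @ k # r" and tp: "tau V E p \<noteq> None"
    have pR: "p \<in> ?R" and Ap: "A V p \<noteq> None" using tp by (auto simp: tau_def restrict_map_def split: if_splits)
    obtain N where N: "sub M p = Some N" "fv N \<subseteq> V" "\<forall>y L. N \<noteq> Lam y L" using A_Some[OF V Ap] by blast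
    have Nkr: "sub N (k#r) = Some (Var x)" using ocsub ocp N(1) sub_append by metis
    then obtain P Q where NPQ: "N = App P Q" using N(3) by (cases N) auto
    have k12: "k = 1 \<or> k = 2" using Nkr NPQ by (auto split: if_splits)
    have tpe: "tau V E p = A V p" using pR by (simp add: tau_def)
    have app: "\<exists>\<psi>. tau V E p = Some (AppS \<psi>)" using A_App[OF V] N NPQ tpe by simp
    have k2: "k = 2"
    proof (rule ccontr)
      assume "k \<noteq> 2"
      then have k1: "k = 1" using k12 by simp
      then have "sub P r = Some (Var x)" using Nkr NPQ by simp
      moreover have "sub M (p@[1]) = Some P" using N(1) NPQ by (simp add: sub_append)
      moreover have "x \<in> fv M" using xV V by auto
      ultimately have "x \<in> fv P" using occ_fv[of P r x] notbound[of x "p@[1]" P] by simp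
      moreover have "HRM ord N" using sub_HRM N(1) by blast
      ultimately obtain w where w: "w \<in> fv Q" "ord x \<le> ord w" using NPQ by auto
      have "w \<in> V" using w N(2) NPQ by auto
      then have "ord w = ord x" using xmax w by force
      then have "w = x" using inj by (simp add: inj_eq)
      then obtain d where d: "sub Q d = Some (Var x)" using w fv_occ by metis
      let ?o = "p @ 2 # d"
      have "sub M ?o = Some (Var x)" using N(1) NPQ d sub_append[of M p N "2#d"] by simp
      then have "?o \<in> Oc" using Oc_def by simp
      moreover have "oc < ?o" using ocp k1 lex_lt by simp
      ultimately have "?o \<in> E" using ocmax by force
      moreover have "prefix p ?o" by simp
      ultimately show False using pR by blast
    qed
    have bnP: "beta_normal P" "\<forall>y L. P \<noteq> Lam y L" using bn_App sub_bnM[OF N(1)] NPQ by auto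
    obtain h z where jz: "sub P h = Some (Var z)" "z \<in> fv P" using head_var[OF bnP] by blast
    have zs: "sub M (p @ 1 # h) = Some (Var z)"
    proof -
      have "sub M (p @ 1 # h) = sub N (1 # h)" by (rule sub_append[OF N(1)])
      also have "\<dots> = sub P (h)" using NPQ by simp
      also have "\<dots> = Some (Var z)" by (rule jz(1))
      finally show ?thesis .
    qed
    have "z \<in> V" using N(2) NPQ jz(2) by auto
    then have "A V (p @ 1 # h) \<noteq> None" using A_Var[OF V zs] by simp
    moreover have "p @ 1 # h \<in> ?R"
      using Rup[rule_format, OF pR, of "p @ 1 # h"] by simp
    ultimately have "tau V E (p @ 1 # h) \<noteq> None" by (simp add: tau_def)
    then have "at_addr (tau V E) (p @ [1]) (h) \<noteq> None" by (simp add: at_addr_def)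
    then have "at_addr (tau V E) (p @ [1]) \<noteq> Map.empty" by (intro notI) simp
    then show "k = 2 \<and> (\<exists>\<psi>. tau V E p = Some (AppS \<psi>)) \<and> at_addr (tau V E) (p @ [1]) \<noteq> Map.empty"
      using k2 app by blast
  qed
  have C4: "is_bp (tau V E)" unfolding tau_def by (rule restr_upclosed[OF A_isbp[OF V] Rup])
  have C5: "\<forall>c\<in>dom (tau V E). set c \<subseteq> {1,2}"
  proof
    fix c assume "c \<in> dom (tau V E)"
    then have "A V c \<noteq> None" by (auto simp: tau_def restrict_map_def split: if_splits)
    then show "set c \<subseteq> {1,2}" using A_Some[OF V] sub_12 by blast
  qed
  have "extr (tau V E) oc (\<Omega> x) (tau V E |` {c. \<not> prefix c oc})"
    by (rule extr_constr[OF C1 C2 C3 C4 C5])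
  moreover have "tau V E |` {c. \<not> prefix c oc} = tau V (insert oc E)"
    unfolding tau_def restrict_restrict by (rule arg_cong[where f="restrict_map _"]) auto
  ultimately show ?thesis by simp
qed

lemma chain_exists:
  assumes V: "V \<subseteq> fv M" and xV: "x \<in> V" and xmax: "\<forall>y\<in>V. ord y \<le> ord x"
    and Oc_def: "Oc = {oc. sub M oc = Some (Var x)}"
  shows "E \<subseteq> Oc \<Longrightarrow> card (Oc - E) = m \<Longrightarrow> \<exists>as. distinct as \<and> set as = Oc - E \<and> extr_chain (tau V E) as (\<Omega> x) (tau V Oc)"
proof (induction m arbitrary: E)
  have finOc: "finite Oc"
    by (rule finite_subset[OF _ finite_sub[of M]]) (auto simp: Oc_def)
  {
    case 0
    then have "E = Oc" using finOc by auto
    then show ?case by (auto intro: exI[of _ "[]"])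
  next
    case (Suc m)
    then have ne: "Oc - E \<noteq> {}" by auto
    define oc where "oc = Max (Oc - E)"
    have fin: "finite (Oc - E)" using finOc by simp
    have oc: "oc \<in> Oc - E" using Max_in[OF fin ne] oc_def by simp
    have ocmax: "\<forall>o'\<in>Oc - E. o' \<le> oc" using Max_ge[OF fin] oc_def by simp
    have E': "insert oc E \<subseteq> Oc" using Suc.prems oc by auto
    have "card (Oc - insert oc E) = m" using Suc.prems(2) oc fin
      by (metis Diff_insert card_Diff_singleton diff_Suc_1)
    from Suc.IH[OF E' this] obtain as where as: "distinct as" "set as = Oc - insert oc E"
      "extr_chain (tau V (insert oc E)) as (\<Omega> x) (tau V Oc)" by blast
    have st: "extr (tau V E) oc (\<Omega> x) (tau V (insert oc E))"
      by (rule ext_step[OF V xV xmax Oc_def Suc.prems(1) oc ocmax])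
    show ?case
      by (rule exI[of _ "oc # as"]) (use as st oc in auto)
  }
qed

lemma tau_all:
  assumes V: "V \<subseteq> fv M" and xV: "x \<in> V"
    and Oc_def: "Oc = {oc. sub M oc = Some (Var x)}"
  shows "tau V Oc = A (V - {x})"
proof
  fix c
  have V': "V - {x} \<subseteq> fv M" using V by auto
  have xM: "x \<in> fv M" using V xV by auto
  show "tau V Oc c = A (V - {x}) c"
  proof (cases "sub M c")
    case None
    then show ?thesis using V V' by (simp add: tau_def restrict_map_def restr_eq)
  next
    case (Some N)
    have "c \<in> {c. \<forall>e\<in>Oc. \<not> prefix c e} \<longleftrightarrow> x \<notin> fv N"
      using occ_iff[OF xM Some] Oc_def by auto
    then show ?thesis using V V' Some by (auto simp: tau_def restrict_map_def restr_eq)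
  qed
qed

end


context lctx begin

abbreviation "fl \<equiv> freelist ord M"

lemma xs_set: "set fl = fv M" and xs_sorted: "sorted_wrt (\<lambda>x y. ord x < ord y) fl"
  using freelist_props[OF inj] by auto

lemma xs_distinct: "distinct fl"
proof -
  have "sorted_wrt (<) (map ord fl)" using xs_sorted by (simp add: sorted_wrt_map)
  then have "distinct (map ord fl)" by (simp add: strict_sorted_iff)
  then show ?thesis by (simp add: distinct_map)
qed

lemma take_fv: "set (take i fl) \<subseteq> fv M"
  using xs_set set_take_subset by metis

lemma idx:
  assumes "1 \<le> i" "i \<le> length fl"
  shows "fl!(i-1) \<in> set (take i fl)"
    and "set (take i fl) - {fl!(i-1)} = set (take (i-1) fl)"
    and "\<forall>y\<in>set (take i fl). ord y \<le> ord (fl!(i-1))"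
proof -
  have tk: "take i fl = take (i-1) fl @ [fl!(i-1)]"
    using assms take_Suc_conv_app_nth[of "i-1" fl] by simp
  show "fl!(i-1) \<in> set (take i fl)" using tk by simp
  have "distinct (take i fl)" using xs_distinct by simp
  then have "fl!(i-1) \<notin> set (take (i-1) fl)" using tk by simp
  then show "set (take i fl) - {fl!(i-1)} = set (take (i-1) fl)" using tk by auto
  show "\<forall>y\<in>set (take i fl). ord y \<le> ord (fl!(i-1))"
  proof
    fix y assume "y \<in> set (take i fl)"
    then obtain j where j: "j < length (take i fl)" "take i fl ! j = y" by (auto simp: in_set_conv_nth)
    then have j2: "j < i" "fl ! j = y" by auto
    show "ord y \<le> ord (fl!(i-1))"
    proof (cases "j = i - 1")
      case True then show ?thesis using j2 by simp
    next
      case False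
      then have "j < i - 1" using j2 by simp
      then have "ord (fl!j) < ord (fl!(i-1))" using sorted_wrt_nth_less[OF xs_sorted] assms by simp
      then show ?thesis using j2 by simp
    qed
  qed
qed

lemma fv_lams_take: "i \<le> length fl \<Longrightarrow> fv (lams (drop i fl) M) = set (take i fl)"
proof -
  assume "i \<le> length fl"
  have d: "set (take i fl) \<inter> set (drop i fl) = {}" using set_take_disj_set_drop_if_distinct[OF xs_distinct, of i i] by simp
  have "fv M = set (take i fl) \<union> set (drop i fl)" using xs_set by (metis append_take_drop_id set_append)
  then show ?thesis using d by (auto simp: fv_lams)
qed

lemma part1:
  assumes "i \<le> length fl"
  shows "dom (blueprint ord \<Omega> (lams (drop i fl) M))
          = (\<lambda>a. replicate (length fl - i) 1 @ a) ` dom (A (set (take i fl)))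
      \<and> at_addr (blueprint ord \<Omega> (lams (drop i fl) M)) (replicate (length fl - i) 1)
          = A (set (take i fl))"
proof -
  let ?L = "lams (drop i fl) M" and ?r = "replicate (length fl - i) 1" and ?V = "set (take i fl)"
  have fvL: "fv ?L = ?V" using fv_lams_take[OF assms] .
  have len: "length (drop i fl) = length fl - i" by simp
  have on: "blueprint ord \<Omega> ?L (?r @ a) = A ?V a" for a
  proof -
    have "sub ?L (?r @ a) = sub M a" using sub_lams[of "drop i fl" M a] len by simp
    then show ?thesis unfolding blueprint_eq[of ord \<Omega> ?L] fvL restr_eq[OF take_fv[of i]] by simp
  qed
  have off: "blueprint ord \<Omega> ?L c = None" if "\<not>(\<exists>a. c = ?r @ a)" for c
  proof -
    have "\<not>(\<exists>a. c = replicate (length (drop i fl)) 1 @ a)" using that unfolding len .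
    then have "sub ?L c = None \<or> (\<exists>y L. sub ?L c = Some (Lam y L))" by (rule sub_lams_other)
    then show ?thesis
    proof
      assume "sub ?L c = None" then show ?thesis unfolding blueprint_eq[of ord \<Omega> ?L] by simp
    next
      assume "\<exists>y L. sub ?L c = Some (Lam y L)"
      then obtain y L where "sub ?L c = Some (Lam y L)" by blast
      then show ?thesis unfolding blueprint_eq[of ord \<Omega> ?L] by (simp add: bpnode_def)
    qed
  qed
  have "dom (blueprint ord \<Omega> ?L) = (\<lambda>a. ?r @ a) ` dom (A ?V)"
  proof
    show "dom (blueprint ord \<Omega> ?L) \<subseteq> (\<lambda>a. ?r @ a) ` dom (A ?V)"
    proof
      fix c assume c: "c \<in> dom (blueprint ord \<Omega> ?L)"
      have "\<exists>a. c = ?r @ a"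
      proof (rule ccontr)
        assume "\<not> (\<exists>a. c = ?r @ a)"
        then have "blueprint ord \<Omega> ?L c = None" by (rule off)
        with c show False by (simp add: domIff)
      qed
      then obtain a where a: "c = ?r @ a" by blast
      have "A ?V a \<noteq> None" using c on[of a] a by (simp add: domIff)
      then show "c \<in> (\<lambda>a. ?r @ a) ` dom (A ?V)" using a by blast
    qed
    show "(\<lambda>a. ?r @ a) ` dom (A ?V) \<subseteq> dom (blueprint ord \<Omega> ?L)"
    proof
      fix c assume "c \<in> (\<lambda>a. ?r @ a) ` dom (A ?V)"
      then obtain a where a: "c = ?r @ a" "a \<in> dom (A ?V)" by blast
      then show "c \<in> dom (blueprint ord \<Omega> ?L)" using on[of a] by (simp add: domIff)
    qed
  qed
  moreover have "at_addr (blueprint ord \<Omega> ?L) ?r = A ?V"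
  proof
    fix a show "at_addr (blueprint ord \<Omega> ?L) ?r a = A ?V a" unfolding at_addr_def by (rule on)
  qed
  ultimately show ?thesis by blast
qed

lemma part2:
  assumes "1 \<le> i" "i \<le> length fl"
  shows "(\<exists>as. as \<noteq> [] \<and> distinct as \<and> set as = {a. sub M a = Some (Var (fl ! (i - 1)))}
           \<and> extr_chain (A (set (take i fl))) as (\<Omega> (fl ! (i - 1))) (A (set (take (i - 1) fl))))
      \<and> (\<forall>bs \<alpha>'. bs \<noteq> [] \<and> distinct bs \<and> set bs = {a. sub M a = Some (Var (fl ! (i - 1)))}
           \<and> extr_chain (A (set (take i fl))) bs (\<Omega> (fl ! (i - 1))) \<alpha>'
           \<longrightarrow> \<alpha>' = A (set (take (i - 1) fl)))"
proof -
  let ?x = "fl ! (i-1)" and ?V = "set (take i fl)"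
  define Oc where "Oc = {a. sub M a = Some (Var ?x)}"
  have V: "?V \<subseteq> fv M" by (rule take_fv)
  note I = idx[OF assms]
  have ta: "tau ?V Oc = A (set (take (i - 1) fl))"
    using tau_all[OF V I(1) Oc_def] I(2) by simp
  obtain as where as: "distinct as" "set as = Oc - {}" "extr_chain (tau ?V {}) as (\<Omega> ?x) (tau ?V Oc)"
    using chain_exists[OF V I(1) I(3) Oc_def, of "{}" "card Oc"] by auto
  have "?x \<in> fv M" using V I(1) by auto
  then obtain d where "sub M d = Some (Var ?x)" using fv_occ[of ?x M] by blast
  then have "Oc \<noteq> {}" using Oc_def by auto
  then have "as \<noteq> []" using as(2) by auto
  then have P1: "\<exists>as. as \<noteq> [] \<and> distinct as \<and> set as = Oc \<and> extr_chain (A ?V) as (\<Omega> ?x) (A (set (take (i - 1) fl)))"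
    using as ta tau_empty by auto
  have P2: "\<alpha>' = A (set (take (i - 1) fl))"
    if "set bs = Oc" "extr_chain (A ?V) bs (\<Omega> ?x) \<alpha>'" for bs \<alpha>'
  proof -
    have "\<alpha>' = A ?V |` {c. \<forall>b\<in>set bs. \<not> prefix c b}" using extr_chain_det[OF that(2)] .
    also have "\<dots> = tau ?V Oc" using that(1) by (simp add: tau_def)
    finally show ?thesis using ta by simp
  qed
  show ?thesis using P1 P2 unfolding Oc_def by blast
qed

lemma part3: "i \<le> length fl \<Longrightarrow> inF (A (set (take i fl))) (map \<Omega> (take i fl))"
proof (induction i)
  case 0
  then show ?case using A_empty inF_nil by simp
next
  case (Suc i)
  have IH: "inF (A (set (take i fl))) (map \<Omega> (take i fl))" using Suc by simp
  from part2[of "Suc i"] Suc.prems obtain as where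
    ne: "as \<noteq> []" and ch: "extr_chain (A (set (take (Suc i) fl))) as (\<Omega> (fl ! i)) (A (set (take i fl)))" by auto
  from ne obtain a as' where aeq: "as = a # as'" by (cases as) auto
  have "(extr_any (\<Omega> (fl ! i)))\<^sup>+\<^sup>+ (A (set (take (Suc i) fl))) (A (set (take i fl)))"
    by (rule chain_trancl) (use ch aeq in \<open>simp only:\<close>)
  from inF_snoc[OF this IH] show ?case
    using Suc.prems by (simp add: take_Suc_conv_app_nth)
qed

lemma part3': "map \<Omega> fl \<in> FF (blueprint ord \<Omega> M)"
  using part3[of "length fl"] A_full xs_set by (simp add: FF_def)

end

theorem lemma2p15:
  fixes ord :: "'v \<Rightarrow> nat" and \<Omega> :: "'v \<Rightarrow> 'a form" and M :: "'v trm"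
    and \<alpha> :: "'a bp" and xs :: "'v list"
  assumes O_inj: "inj ord"
    and X_inf: "infinite (UNIV :: 'v set)"
    and \<Omega>_inf: "\<And>\<phi>. infinite (\<Omega> -` {\<phi>})"
    and M_NF: "in_LambdaNF ord \<Omega> M"
    and \<alpha>_def: "\<alpha> = blueprint ord \<Omega> M"
    and xs_def: "xs = freelist ord M"
  shows
    "(\<forall>i \<le> length xs.
        dom (blueprint ord \<Omega> (lams (drop i xs) M))
          = (\<lambda>a. replicate (length xs - i) 1 @ a) ` dom (restr_free M \<alpha> (set (take i xs)))
      \<and> at_addr (blueprint ord \<Omega> (lams (drop i xs) M)) (replicate (length xs - i) 1)
          = restr_free M \<alpha> (set (take i xs)))
   \<and> (\<forall>i \<in> {1..length xs}.
        (\<exists>as. as \<noteq> [] \<and> distinct as \<and> set as = {a. sub M a = Some (Var (xs ! (i - 1)))}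
           \<and> extr_chain (restr_free M \<alpha> (set (take i xs))) as (\<Omega> (xs ! (i - 1)))
                        (restr_free M \<alpha> (set (take (i - 1) xs))))
      \<and> (\<forall>bs \<alpha>'. bs \<noteq> [] \<and> distinct bs \<and> set bs = {a. sub M a = Some (Var (xs ! (i - 1)))}
           \<and> extr_chain (restr_free M \<alpha> (set (take i xs))) bs (\<Omega> (xs ! (i - 1))) \<alpha>'
           \<longrightarrow> \<alpha>' = restr_free M \<alpha> (set (take (i - 1) xs))))
   \<and> map \<Omega> xs \<in> FF \<alpha>"
proof -
  interpret lctx ord \<Omega> M by unfold_locales (fact O_inj, fact M_NF)
  show ?thesis
    unfolding \<alpha>_def xs_def
    apply (intro conjI)
    subgoal using part1 by blast
    subgoal using part2 by auto
    subgoal by (rule part3')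
    done
qed

end
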